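(* Let $n\ge2$, $b_1,\dots,b_n\in\mathbb{R}^d$ with $\|b_i\|\le R'$ ($R'>0$), $B=\frac1n[b_1,\dots,b_n]^T$, each $g_i^*:\mathbb{R}\to\mathbb{R}\cup\{+\infty\}$ proper, lower semicontinuous, convex, $g^*(y)=\frac1n\sum_ig_i^*(y_i)$, and $\ell:\mathbb{R}^d\to\mathbb{R}\cup\{+\infty\}$ proper, lower semicontinuous, $\sigma$-strongly convex ($\sigma\ge0$). For the VRPDA$^2$ algorithm in the context, for all $k\ge2$ and all $(u,v)\in\mathcal{X}\times\mathcal{Y}$ (for every realization of the random indices), $$\psi_k(y_k)\le\sum_{i=2}^ka_ig^*_{j_i}(v_{j_i})+a_1g^*(v)+\frac n2\|v-y_0\|^2-\frac n2\|v-y_k\|^2,$$ $$\phi_k(x_k)\le A_k\ell(u)+\frac n2\|u-x_0\|^2-\frac{n+\sigma A_k}{2}\|u-x_k\|^2.$$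
   Context: Norms are Euclidean; $\sigma$-strong convexity of $f$ means $f((1-\alpha)x+\alpha\hat x)\le(1-\alpha)f(x)+\alpha f(\hat x)-\frac\sigma2\alpha(1-\alpha)\|\hat x-x\|^2$. $\mathcal{X}=\mathrm{dom}(\ell)$, $\mathcal{Y}=\mathrm{dom}(g^* )$; $y_{k,j}$ is the $j$-th coordinate of $y_k$. VRPDA$^2$ algorithm: given $(x_0,y_0),(u,v)\in\mathcal{X}\times\mathcal{Y}$: $\phi_0(x)=\frac12\|x-x_0\|^2$, $\psi_0(y)=\frac12\|y-y_0\|^2$, $a_0=A_0=0$, $\tilde a_1=\frac1{2R'}$; $\tilde\psi_1(y)=\psi_0(y)+\tilde a_1(\langle-Bx_0,y-v\rangle+g^*(y))$, $y_1=\arg\min\tilde\psi_1$; $z_1=B^Ty_1$; $\tilde\phi_1(x)=\phi_0(x)+\tilde a_1(\langle x-u,z_1\rangle+\ell(x))$, $x_1=\arg\min\tilde\phi_1$; $\psi_1=n\tilde\psi_1$, $\phi_1=n\tilde\phi_1$, $a_1=A_1=n\tilde a_1$, $a_2=\frac{a_1}{n-1}$, $A_2=A_1+a_2$. For $k=2,3,\dots$: $\bar x_{k-1}=x_{k-1}+\frac{a_{k-1}}{a_k}(x_{k-1}-x_{k-2})$; pick $j_k$ uniformly at random from $\{1,\dots,n\}$; $\psi_k(y)=\psi_{k-1}(y)+a_k(-b_{j_k}^T\bar x_{k-1}(y_{j_k}-v_{j_k})+g^*_{j_k}(y_{j_k}))$, $y_k=\arg\min_y\psi_k(y)$; $\phi_k(x)=\phi_{k-1}(x)+a_k(\langle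 x-u,z_{k-1}+(y_{k,j_k}-y_{k-1,j_k})b_{j_k}\rangle+\ell(x))$, $x_k=\arg\min_x\phi_k(x)$; $z_k=z_{k-1}+\frac1n(y_{k,j_k}-y_{k-1,j_k})b_{j_k}$; $a_{k+1}=\min\{(1+\frac1{n-1})a_k,\frac{\sqrt{n(n+\sigma A_k)}}{2R'}\}$, $A_{k+1}=A_k+a_{k+1}$. *)

theory Defs
  imports "HOL-Analysis.Analysis"
begin

text \<open>Functions into R \<union> {+\<infinity>} are modelled as functions into ereal that never take -\<infinity>.\<close>

definition proper_fun :: "('a \<Rightarrow> ereal) \<Rightarrow> bool" where
  "proper_fun f \<longleftrightarrow> (\<forall>x. f x \<noteq> -\<infinity>) \<and> (\<exists>x. f x \<noteq> \<infinity>)"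

definition lsc_fun :: "('a::topological_space \<Rightarrow> ereal) \<Rightarrow> bool" where
  "lsc_fun f \<longleftrightarrow> (\<forall>x. f x \<le> Liminf (at x) f)"

definition convex_fun :: "('a::real_vector \<Rightarrow> ereal) \<Rightarrow> bool" where
  "convex_fun f \<longleftrightarrow> (\<forall>x y (\<alpha>::real). 0 < \<alpha> \<and> \<alpha> < 1 \<longrightarrow>
      f ((1 - \<alpha>) *\<^sub>R x + \<alpha> *\<^sub>R y) \<le> ereal (1 - \<alpha>) * f x + ereal \<alpha> * f y)"

definition strongly_convex_fun :: "real \<Rightarrow> ('a::real_normed_vector \<Rightarrow> ereal) \<Rightarrow> bool" where
  "strongly_convex_fun \<sigma> f \<longleftrightarrow> (\<forall>x y (\<alpha>::real). 0 < \<alpha> \<and> \<alpha> < 1 \<longrightarrow>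
      f ((1 - \<alpha>) *\<^sub>R x + \<alpha> *\<^sub>R y) \<le> ereal (1 - \<alpha>) * f x + ereal \<alpha> * f y
        - ereal (\<sigma> / 2 * \<alpha> * (1 - \<alpha>) * (norm (y - x))\<^sup>2))"

definition edom :: "('a \<Rightarrow> ereal) \<Rightarrow> 'a set" where
  "edom f = {x. f x < \<infinity>}"

text \<open>Index type 'n with n = CARD('n); b :: 'n \<Rightarrow> 'x gives the rows b_i of n*B.\<close>

definition Bop :: "('n::finite \<Rightarrow> 'x::euclidean_space) \<Rightarrow> 'x \<Rightarrow> real^'n" where
  "Bop b x = (\<chi> i. (b i \<bullet> x) / real CARD('n))"

definition BopT :: "('n::finite \<Rightarrow> 'x::euclidean_space) \<Rightarrow> real^'n \<Rightarrow> 'x" where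
  "BopT b y = (1 / real CARD('n)) *\<^sub>R (\<Sum>i\<in>UNIV. (y $ i) *\<^sub>R b i)"

definition gstar :: "('n::finite \<Rightarrow> real \<Rightarrow> ereal) \<Rightarrow> real^'n \<Rightarrow> ereal" where
  "gstar gs y = ereal (1 / real CARD('n)) * (\<Sum>i\<in>UNIV. gs i (y $ i))"

fun vrpda_aA :: "nat \<Rightarrow> real \<Rightarrow> real \<Rightarrow> nat \<Rightarrow> real \<times> real" where
  "vrpda_aA n R \<sigma> 0 = (0, 0)"
| "vrpda_aA n R \<sigma> (Suc 0) = (real n / (2 * R), real n / (2 * R))"
| "vrpda_aA n R \<sigma> (Suc (Suc 0)) =
     (let a1 = real n / (2 * R) in (a1 / (real n - 1), a1 + a1 / (real n - 1)))"
| "vrpda_aA n R \<sigma> (Suc (Suc (Suc k))) =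
     (let (a, A) = vrpda_aA n R \<sigma> (Suc (Suc k));
          a' = min ((1 + 1 / (real n - 1)) * a) (sqrt (real n * (real n + \<sigma> * A)) / (2 * R))
      in (a', A + a'))"

definition va :: "nat \<Rightarrow> real \<Rightarrow> real \<Rightarrow> nat \<Rightarrow> real" where
  "va n R \<sigma> k = fst (vrpda_aA n R \<sigma> k)"

definition vA :: "nat \<Rightarrow> real \<Rightarrow> real \<Rightarrow> nat \<Rightarrow> real" where
  "vA n R \<sigma> k = snd (vrpda_aA n R \<sigma> k)"

text \<open>Extrapolated point xbar_{k-1}, indexed by k-1.\<close>
definition xbar :: "nat \<Rightarrow> real \<Rightarrow> real \<Rightarrow> (nat \<Rightarrow> 'x::real_vector) \<Rightarrow> nat \<Rightarrow> 'x" where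
  "xbar n R \<sigma> xs m = xs m + (va n R \<sigma> m / va n R \<sigma> (Suc m)) *\<^sub>R (xs m - xs (m - 1))"

fun psi :: "('n::finite \<Rightarrow> 'x::euclidean_space) \<Rightarrow> ('n \<Rightarrow> real \<Rightarrow> ereal) \<Rightarrow> real \<Rightarrow> real
      \<Rightarrow> 'x \<Rightarrow> real^'n \<Rightarrow> real^'n \<Rightarrow> (nat \<Rightarrow> 'n) \<Rightarrow> (nat \<Rightarrow> 'x) \<Rightarrow> nat \<Rightarrow> real^'n \<Rightarrow> ereal" where
  "psi b gs R \<sigma> x0 y0 v js xs 0 y = ereal ((norm (y - y0))\<^sup>2 / 2)"
| "psi b gs R \<sigma> x0 y0 v js xs (Suc 0) y =
     ereal (real CARD('n)) *
       (ereal ((norm (y - y0))\<^sup>2 / 2)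
        + ereal (1 / (2 * R)) * (ereal ((- Bop b x0) \<bullet> (y - v)) + gstar gs y))"
| "psi b gs R \<sigma> x0 y0 v js xs (Suc (Suc k)) y =
     psi b gs R \<sigma> x0 y0 v js xs (Suc k) y
     + ereal (va CARD('n) R \<sigma> (Suc (Suc k))) *
        (ereal (- (b (js (Suc (Suc k))) \<bullet> xbar CARD('n) R \<sigma> xs (Suc k))
                  * (y $ js (Suc (Suc k)) - v $ js (Suc (Suc k))))
         + gs (js (Suc (Suc k))) (y $ js (Suc (Suc k))))"

fun phi :: "('n::finite \<Rightarrow> 'x::euclidean_space) \<Rightarrow> ('x \<Rightarrow> ereal) \<Rightarrow> real \<Rightarrow> real
      \<Rightarrow> 'x \<Rightarrow> 'x \<Rightarrow> (nat \<Rightarrow> 'n) \<Rightarrow> (nat \<Rightarrow> real^'n) \<Rightarrow> (nat \<Rightarrow> 'x) \<Rightarrow> nat \<Rightarrow> 'x \<Rightarrow> ereal" where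
  "phi b ell R \<sigma> x0 u js ys zs 0 x = ereal ((norm (x - x0))\<^sup>2 / 2)"
| "phi b ell R \<sigma> x0 u js ys zs (Suc 0) x =
     ereal (real CARD('n)) *
       (ereal ((norm (x - x0))\<^sup>2 / 2)
        + ereal (1 / (2 * R)) * (ereal ((x - u) \<bullet> zs 1) + ell x))"
| "phi b ell R \<sigma> x0 u js ys zs (Suc (Suc k)) x =
     phi b ell R \<sigma> x0 u js ys zs (Suc k) x
     + ereal (va CARD('n) R \<sigma> (Suc (Suc k))) *
        (ereal ((x - u) \<bullet> (zs (Suc k)
            + (ys (Suc (Suc k)) $ js (Suc (Suc k)) - ys (Suc k) $ js (Suc (Suc k)))
                *\<^sub>R b (js (Suc (Suc k)))))
         + ell x)"

definition vrpda2_run ::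
  "('n::finite \<Rightarrow> 'x::euclidean_space) \<Rightarrow> ('n \<Rightarrow> real \<Rightarrow> ereal) \<Rightarrow> ('x \<Rightarrow> ereal) \<Rightarrow> real \<Rightarrow> real
   \<Rightarrow> 'x \<Rightarrow> real^'n \<Rightarrow> 'x \<Rightarrow> real^'n \<Rightarrow> (nat \<Rightarrow> 'n)
   \<Rightarrow> (nat \<Rightarrow> 'x) \<Rightarrow> (nat \<Rightarrow> real^'n) \<Rightarrow> (nat \<Rightarrow> 'x) \<Rightarrow> bool" where
  "vrpda2_run b gs ell R \<sigma> x0 y0 u v js xs ys zs \<longleftrightarrow>
     xs 0 = x0 \<and> ys 0 = y0 \<and>
     (\<forall>k\<ge>1. \<forall>y. psi b gs R \<sigma> x0 y0 v js xs k (ys k) \<le> psi b gs R \<sigma> x0 y0 v js xs k y) \<and>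
     (\<forall>k\<ge>1. \<forall>x. phi b ell R \<sigma> x0 u js ys zs k (xs k) \<le> phi b ell R \<sigma> x0 u js ys zs k x) \<and>
     zs 1 = BopT b (ys 1) \<and>
     (\<forall>k\<ge>2. zs k = zs (k - 1)
        + (1 / real CARD('n)) *\<^sub>R ((ys k $ js k - ys (k - 1) $ js k) *\<^sub>R b (js k)))"

end

theory Submission
  imports Defs
begin

definition sc :: "real \<Rightarrow> ('a::real_normed_vector \<Rightarrow> ereal) \<Rightarrow> bool" where
  "sc \<mu> F \<longleftrightarrow> (\<forall>x. F x \<noteq> -\<infinity>) \<and> (\<forall>x y (\<alpha>::real). 0 < \<alpha> \<and> \<alpha> < 1 \<longrightarrow>
      F ((1 - \<alpha>) *\<^sub>R x + \<alpha> *\<^sub>R y) \<le> ereal (1 - \<alpha>) * F x + ereal \<alpha> * F y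
        - ereal (\<mu> / 2 * \<alpha> * (1 - \<alpha>) * (norm (y - x))\<^sup>2))"

lemma sc_eq: "sc \<mu> F \<Longrightarrow> \<mu> = \<mu>' \<Longrightarrow> sc \<mu>' F" by simp

lemma ereal_add_lemma:
  assumes "a \<noteq> -\<infinity>" "b \<noteq> -\<infinity>" "c \<noteq> -\<infinity>" "d \<noteq> -\<infinity>" "0 < (al::real)" "al < 1"
  shows "(ereal (1-al)*a + ereal al*b - ereal e1) + (ereal (1-al)*c + ereal al*d - ereal e2)
       = ereal (1-al)*(a+c) + ereal al*(b+d) - ereal (e1+e2)"
  using assms by (cases a; cases b; cases c; cases d; simp add: algebra_simps)

lemma sc_add:
  assumes "sc m1 F" "sc m2 G" shows "sc (m1+m2) (\<lambda>x. F x + G x)"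
  unfolding sc_def
proof (intro conjI allI impI)
  fix x show "F x + G x \<noteq> -\<infinity>" using assms unfolding sc_def by simp
next
  fix x y and al :: real assume a: "0 < al \<and> al < 1"
  have "F ((1 - al) *\<^sub>R x + al *\<^sub>R y) + G ((1 - al) *\<^sub>R x + al *\<^sub>R y)
     \<le> (ereal (1-al)*F x + ereal al*F y - ereal (m1 / 2 * al * (1 - al) * (norm (y - x))\<^sup>2))
       + (ereal (1-al)*G x + ereal al*G y - ereal (m2 / 2 * al * (1 - al) * (norm (y - x))\<^sup>2))"
    using assms a unfolding sc_def by (intro add_mono) auto
  also have "\<dots> = ereal (1-al)*(F x + G x) + ereal al*(F y + G y)
      - ereal (m1 / 2 * al * (1 - al) * (norm (y - x))\<^sup>2 + m2 / 2 * al * (1 - al) * (norm (y - x))\<^sup>2)"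
    using assms a unfolding sc_def by (intro ereal_add_lemma) auto
  also have "m1 / 2 * al * (1 - al) * (norm (y - x))\<^sup>2 + m2 / 2 * al * (1 - al) * (norm (y - x))\<^sup>2
     = (m1+m2) / 2 * al * (1 - al) * (norm (y - x))\<^sup>2" by (simp add: field_simps)
  finally show "F ((1 - al) *\<^sub>R x + al *\<^sub>R y) + G ((1 - al) *\<^sub>R x + al *\<^sub>R y)
      \<le> ereal (1 - al) * (F x + G x) + ereal al * (F y + G y) -
        ereal ((m1 + m2) / 2 * al * (1 - al) * (norm (y - x))\<^sup>2)" .
qed

lemma ereal_scale_lemma:
  assumes "a \<noteq> -\<infinity>" "b \<noteq> -\<infinity>" "0 < (al::real)" "al < 1" "0 \<le> c"
  shows "ereal c * (ereal (1-al)*a + ereal al*b - ereal e)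
       = ereal (1-al)*(ereal c * a) + ereal al*(ereal c * b) - ereal (c*e)"
  using assms by (cases a; cases b; cases "c = 0"; simp add: algebra_simps)

lemma sc_scale:
  assumes "sc m F" "0 \<le> c" shows "sc (c*m) (\<lambda>x. ereal c * F x)"
  unfolding sc_def
proof (intro conjI allI impI)
  fix x show "ereal c * F x \<noteq> -\<infinity>" using assms unfolding sc_def
    by (cases "F x") auto
next
  fix x y and al :: real assume a: "0 < al \<and> al < 1"
  have "ereal c * F ((1 - al) *\<^sub>R x + al *\<^sub>R y)
     \<le> ereal c * (ereal (1-al)*F x + ereal al*F y - ereal (m / 2 * al * (1 - al) * (norm (y - x))\<^sup>2))"
    using assms a unfolding sc_def by (intro ereal_mult_left_mono) auto
  also have "\<dots> = ereal (1-al)*(ereal c * F x) + ereal al*(ereal c * F y)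
      - ereal (c * (m / 2 * al * (1 - al) * (norm (y - x))\<^sup>2))"
    using assms a unfolding sc_def by (intro ereal_scale_lemma) auto
  also have "c * (m / 2 * al * (1 - al) * (norm (y - x))\<^sup>2)
     = (c*m) / 2 * al * (1 - al) * (norm (y - x))\<^sup>2" by (simp add: algebra_simps)
  finally show "ereal c * F ((1 - al) *\<^sub>R x + al *\<^sub>R y)
      \<le> ereal (1 - al) * (ereal c * F x) + ereal al * (ereal c * F y) -
        ereal (c * m / 2 * al * (1 - al) * (norm (y - x))\<^sup>2)" by simp
qed

lemma quad_id0:
  fixes p q :: "'a::real_inner"
  shows "(norm ((1 - al) *\<^sub>R p + al *\<^sub>R q))\<^sup>2
    = (1-al) * (norm p)\<^sup>2 + al * (norm q)\<^sup>2 - al*(1-al)*(norm (q-p))\<^sup>2"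
proof -
  have "(norm ((1 - al) *\<^sub>R p + al *\<^sub>R q))\<^sup>2 = (1-al)*(1-al)*(p \<bullet> p) + 2*al*(1-al)*(p \<bullet> q) + al*al*(q \<bullet> q)"
    unfolding power2_norm_eq_inner
    by (simp only: inner_add_left inner_add_right inner_scaleR_left inner_scaleR_right inner_commute[of q p]) (simp add: algebra_simps)
  moreover have "(norm (q-p))\<^sup>2 = q \<bullet> q - 2 * (p \<bullet> q) + p \<bullet> p"
    unfolding power2_norm_eq_inner
    by (simp only: inner_diff_left inner_diff_right inner_commute[of q p])
  ultimately show ?thesis unfolding power2_norm_eq_inner by (simp add: algebra_simps)
qed

lemma quad_id:
  fixes x y z :: "'a::real_inner"
  shows "(norm ((1 - al) *\<^sub>R x + al *\<^sub>R y - z))\<^sup>2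
    = (1-al) * (norm (x - z))\<^sup>2 + al * (norm (y - z))\<^sup>2 - al*(1-al)*(norm (y-x))\<^sup>2"
proof -
  have e: "(1 - al) *\<^sub>R x + al *\<^sub>R y - z = (1-al) *\<^sub>R (x - z) + al *\<^sub>R (y - z)"
    by (simp add: algebra_simps)
  have e2: "y - x = (y - z) - (x - z)" by simp
  show ?thesis unfolding e by (subst e2) (rule quad_id0)
qed

lemma sc_quad: "sc 1 (\<lambda>y::'a::real_inner. ereal ((norm (y - z))\<^sup>2 / 2))"
  unfolding sc_def quad_id by (auto simp: field_simps)

lemma sc_affine:
  assumes "\<And>x y al. f ((1 - al) *\<^sub>R x + al *\<^sub>R y) = (1-al) * f x + al * f y"
  shows "sc 0 (\<lambda>y. ereal (f y))"
  unfolding sc_def using assms by auto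

lemma sc_coord:
  assumes "convex_fun g" "\<forall>t. g t \<noteq> -\<infinity>"
  shows "sc 0 (\<lambda>y::real^'n. g (y $ j))"
  using assms unfolding sc_def convex_fun_def by auto

lemma sc_strong: "strongly_convex_fun \<sigma> f \<Longrightarrow> \<forall>t. f t \<noteq> -\<infinity> \<Longrightarrow> sc \<sigma> f"
  unfolding sc_def strongly_convex_fun_def by auto

lemma sc_sum:
  assumes "finite S" "\<And>i. sc 0 (F i)" shows "sc 0 (\<lambda>y. \<Sum>i\<in>S. F i y)"
  using assms(1)
proof (induction S rule: finite_induct)
  case empty
  then show ?case unfolding sc_def by (simp add: zero_ereal_def)
next
  case (insert a S)
  have "sc (0+0) (\<lambda>y. F a y + (\<Sum>i\<in>S. F i y))" by (intro sc_add assms insert)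
  then show ?case using insert by simp
qed

lemma sc_min:
  assumes "sc \<mu> F" "0 \<le> \<mu>" "\<And>w. F z \<le> F w"
  shows "F z \<le> F v - ereal (\<mu> / 2 * (norm (v - z))\<^sup>2)"
proof (cases "F v = \<infinity>")
  case True then show ?thesis by simp
next
  case False
  have nm: "\<And>x. F x \<noteq> -\<infinity>" using assms(1) unfolding sc_def by auto
  obtain fv where fv: "F v = ereal fv" using False nm[of v] by (cases "F v") auto
  have "F z \<le> ereal fv" using assms(3)[of v] fv by simp
  then obtain fz where fz: "F z = ereal fz" using nm[of z] by (cases "F z") auto
  define d where "d = (norm (v - z))\<^sup>2"
  have key: "fz \<le> fv - \<mu>/2 * (1-al) * d" if al: "0 < al" "al < 1" for al
  proof -
    have "F z \<le> F ((1 - al) *\<^sub>R z + al *\<^sub>R v)" by (rule assms(3))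
    also have "\<dots> \<le> ereal (1 - al) * F z + ereal al * F v - ereal (\<mu> / 2 * al * (1 - al) * d)"
      using assms(1) al unfolding sc_def d_def by auto
    finally have "fz \<le> (1-al)*fz + al*fv - \<mu> / 2 * al * (1 - al) * d" using fz fv by simp
    hence "al * fz \<le> al * (fv - \<mu>/2 * (1-al) * d)" by (simp add: algebra_simps)
    thus ?thesis using al by simp
  qed
  have d0: "0 \<le> d" unfolding d_def by simp
  have "fz \<le> fv - \<mu>/2 * d"
  proof (rule ccontr)
    assume "\<not> ?thesis"
    hence c: "c > 0" if "c = fz - fv + \<mu>/2*d" for c using that by simp
    define c where "c = fz - fv + \<mu>/2*d"
    have cp: "c > 0" using c c_def by simp
    define al where "al = min (1/2) (c / (\<mu> * d + 1))"
    have "0 < c / (\<mu> * d + 1)" using cp assms(2) d0 by (intro divide_pos_pos) (auto simp: add_nonneg_pos)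
    hence al0: "0 < al" "al < 1" unfolding al_def by auto
    have "fz \<le> fv - \<mu>/2 * (1-al) * d" by (rule key[OF al0])
    moreover have "\<mu>/2*(1-al)*d = \<mu>/2*d - \<mu>/2*al*d" by (simp add: field_simps)
    ultimately have "c \<le> \<mu>/2 * al * d" unfolding c_def by linarith
    also have "\<mu>/2 * al * d \<le> \<mu>/2 * d * (c / (\<mu> * d + 1))"
    proof -
      have "al \<le> c / (\<mu> * d + 1)" by (simp add: al_def)
      moreover have "0 \<le> \<mu>/2 * d" using assms(2) d0 by simp
      ultimately have "\<mu>/2 * d * al \<le> \<mu>/2 * d * (c / (\<mu> * d + 1))" by (rule mult_left_mono)
      thus ?thesis by (simp add: mult.commute mult.left_commute)
    qed
    also have "\<dots> < c"
    proof -
      have "\<mu>/2 * d * (c / (\<mu> * d + 1)) = c * ((\<mu>*d/2) / (\<mu> * d + 1))" by simp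
      also have "(\<mu>*d/2) / (\<mu> * d + 1) < 1"
      proof -
        have p: "0 \<le> \<mu>*d" using assms(2) d0 by simp
        hence "\<mu>*d/2 < \<mu> * d + 1" by simp
        thus ?thesis using p by (simp add: divide_less_eq)
      qed
      hence "c * ((\<mu>*d/2) / (\<mu> * d + 1)) < c * 1" using cp by (intro mult_strict_left_mono) auto
      finally show ?thesis by simp
    qed
    finally show False by simp
  qed
  thus ?thesis using fz fv d_def by simp
qed


lemma va_nonneg: "2 \<le> n \<Longrightarrow> 0 < R \<Longrightarrow> 0 \<le> \<sigma> \<Longrightarrow> 0 \<le> va n R \<sigma> k \<and> 0 \<le> vA n R \<sigma> k"
proof (induction n R \<sigma> k rule: vrpda_aA.induct)
  case (4 n R \<sigma> k)
  obtain a A where aA: "vrpda_aA n R \<sigma> (Suc (Suc k)) = (a, A)" by force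
  have "0 \<le> a" "0 \<le> A" using 4 aA by (auto simp: va_def vA_def)
  moreover have "2 \<le> real n" using 4 by simp
  ultimately show ?case using 4 aA
    by (auto simp: va_def vA_def Let_def intro!: add_nonneg_nonneg divide_nonneg_pos mult_nonneg_nonneg)
qed (auto simp: va_def vA_def Let_def)

lemma vA_step: "vA n R \<sigma> (Suc (Suc m)) = vA n R \<sigma> (Suc m) + va n R \<sigma> (Suc (Suc m))"
proof (cases m)
  case 0 then show ?thesis by (simp add: va_def vA_def Let_def)
next
  case (Suc k)
  obtain a A where aA: "vrpda_aA n R \<sigma> (Suc (Suc k)) = (a, A)" by force
  show ?thesis using Suc aA by (simp add: va_def vA_def Let_def)
qed

lemma va1: "va n R \<sigma> (Suc 0) = real n / (2 * R)" by (simp add: va_def)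
lemma vA1: "vA n R \<sigma> (Suc 0) = real n / (2 * R)" by (simp add: vA_def)

lemma sc_gstar:
  assumes "\<forall>i. convex_fun (gs i) \<and> (\<forall>t. gs i t \<noteq> -\<infinity>)"
  shows "sc 0 (gstar (gs :: 'n::finite \<Rightarrow> real \<Rightarrow> ereal))"
proof -
  have "sc 0 (\<lambda>y::real^'n. \<Sum>i\<in>UNIV. gs i (y $ i))"
    by (rule sc_sum) (auto intro!: sc_coord simp: assms)
  from sc_scale[OF this, of "1 / real CARD('n)"]
  have "sc 0 (\<lambda>y::real^'n. ereal (1 / real CARD('n)) * (\<Sum>i\<in>UNIV. gs i (y $ i)))" by simp
  moreover have "gstar gs = (\<lambda>y::real^'n. ereal (1 / real CARD('n)) * (\<Sum>i\<in>UNIV. gs i (y $ i)))"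
    by (rule ext) (simp add: gstar_def)
  ultimately show ?thesis by simp
qed

lemma psi_sc:
  fixes b :: "'n::finite \<Rightarrow> 'x::euclidean_space"
  assumes R: "R > 0" and g: "\<forall>i. convex_fun (gs i) \<and> (\<forall>t. gs i t \<noteq> -\<infinity>)"
    and a: "\<And>k. 0 \<le> va CARD('n) R \<sigma> k"
  shows "sc (real CARD('n)) (psi b gs R \<sigma> x0 y0 v js xs (Suc m))"
proof (induction m)
  case 0
  have l: "sc 0 (\<lambda>y. ereal ((- Bop b x0) \<bullet> (y - v)))"
    by (rule sc_affine) (simp add: inner_simps algebra_simps)
  have "sc (real CARD('n) * (1 + (1 / (2 * R)) * (0 + 0)))
     (\<lambda>y. ereal (real CARD('n)) *
       (ereal ((norm (y - y0))\<^sup>2 / 2)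
        + ereal (1 / (2 * R)) * (ereal ((- Bop b x0) \<bullet> (y - v)) + gstar gs y)))"
    using R by (intro sc_scale sc_add sc_quad l sc_gstar g) auto
  moreover have "psi b gs R \<sigma> x0 y0 v js xs (Suc 0) = (\<lambda>y. ereal (real CARD('n)) *
       (ereal ((norm (y - y0))\<^sup>2 / 2)
        + ereal (1 / (2 * R)) * (ereal ((- Bop b x0) \<bullet> (y - v)) + gstar gs y)))"
    by (rule ext) simp
  ultimately show ?case by simp
next
  case (Suc m)
  let ?j = "js (Suc (Suc m))"
  let ?s = "b ?j \<bullet> xbar CARD('n) R \<sigma> xs (Suc m)"
  have l: "sc 0 (\<lambda>y::real^'n. ereal (- ?s * (y $ ?j - v $ ?j)))"
    by (rule sc_affine) (simp add: algebra_simps)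
  have "sc (real CARD('n) + va CARD('n) R \<sigma> (Suc (Suc m)) * (0 + 0))
     (\<lambda>y. psi b gs R \<sigma> x0 y0 v js xs (Suc m) y
     + ereal (va CARD('n) R \<sigma> (Suc (Suc m))) *
        (ereal (- ?s * (y $ ?j - v $ ?j)) + gs ?j (y $ ?j)))"
    using g a by (intro sc_add Suc sc_scale l sc_coord) auto
  moreover have "psi b gs R \<sigma> x0 y0 v js xs (Suc (Suc m)) = (\<lambda>y. psi b gs R \<sigma> x0 y0 v js xs (Suc m) y
     + ereal (va CARD('n) R \<sigma> (Suc (Suc m))) *
        (ereal (- ?s * (y $ ?j - v $ ?j)) + gs ?j (y $ ?j)))"
    by (rule ext) simp
  ultimately show ?case by simp
qed

lemma phi_sc:
  fixes b :: "'n::finite \<Rightarrow> 'x::euclidean_space"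
  assumes R: "R > 0" and e: "strongly_convex_fun \<sigma> ell" "\<forall>t. ell t \<noteq> -\<infinity>"
    and a: "\<And>k. 0 \<le> va CARD('n) R \<sigma> k"
  shows "sc (real CARD('n) + \<sigma> * vA CARD('n) R \<sigma> (Suc m)) (phi b ell R \<sigma> x0 u js ys zs (Suc m))"
proof (induction m)
  case 0
  have l: "sc 0 (\<lambda>x. ereal ((x - u) \<bullet> zs 1))"
    by (rule sc_affine) (simp add: inner_simps algebra_simps)
  have h1: "sc (real CARD('n) * (1 + (1 / (2 * R)) * (0 + \<sigma>)))
     (\<lambda>x. ereal (real CARD('n)) *
       (ereal ((norm (x - x0))\<^sup>2 / 2)
        + ereal (1 / (2 * R)) * (ereal ((x - u) \<bullet> zs 1) + ell x)))"
    using R by (intro sc_scale sc_add sc_quad l sc_strong e) auto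
  have h2: "phi b ell R \<sigma> x0 u js ys zs (Suc 0) = (\<lambda>x. ereal (real CARD('n)) *
       (ereal ((norm (x - x0))\<^sup>2 / 2)
        + ereal (1 / (2 * R)) * (ereal ((x - u) \<bullet> zs 1) + ell x)))"
    by (rule ext) simp
  have h3: "real CARD('n) * (1 + (1 / (2 * R)) * (0 + \<sigma>)) = real CARD('n) + \<sigma> * vA CARD('n) R \<sigma> (Suc 0)"
    by (simp add: vA1 field_simps)
  show ?case unfolding h2 by (rule sc_eq[OF h1 h3])
next
  case (Suc m)
  let ?j = "js (Suc (Suc m))"
  let ?w = "zs (Suc m) + (ys (Suc (Suc m)) $ ?j - ys (Suc m) $ ?j) *\<^sub>R b ?j"
  have l: "sc 0 (\<lambda>x. ereal ((x - u) \<bullet> ?w))"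
    by (rule sc_affine) (simp add: inner_simps algebra_simps)
  have h1: "sc ((real CARD('n) + \<sigma> * vA CARD('n) R \<sigma> (Suc m)) + va CARD('n) R \<sigma> (Suc (Suc m)) * (0 + \<sigma>))
     (\<lambda>x. phi b ell R \<sigma> x0 u js ys zs (Suc m) x
     + ereal (va CARD('n) R \<sigma> (Suc (Suc m))) * (ereal ((x - u) \<bullet> ?w) + ell x))"
    using e a by (intro sc_add Suc sc_scale l sc_strong) auto
  have h2: "phi b ell R \<sigma> x0 u js ys zs (Suc (Suc m)) = (\<lambda>x. phi b ell R \<sigma> x0 u js ys zs (Suc m) x
     + ereal (va CARD('n) R \<sigma> (Suc (Suc m))) * (ereal ((x - u) \<bullet> ?w) + ell x))"
    by (rule ext) simp
  have h3: "(real CARD('n) + \<sigma> * vA CARD('n) R \<sigma> (Suc m)) + va CARD('n) R \<sigma> (Suc (Suc m)) * (0 + \<sigma>)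
     = real CARD('n) + \<sigma> * vA CARD('n) R \<sigma> (Suc (Suc m))"
    by (simp add: vA_step algebra_simps)
  show ?case unfolding h2 by (rule sc_eq[OF h1 h3])
qed


lemma psi_val:
  fixes b :: "'n::finite \<Rightarrow> 'x::euclidean_space"
  assumes gg: "\<And>i. gs i (v $ i) = ereal (gg i)" and gv: "gstar gs v = ereal gv" and R: "R > 0"
  shows "psi b gs R \<sigma> x0 y0 v js xs (Suc m) v = ereal (real CARD('n) / 2 * (norm (v - y0))\<^sup>2
     + va CARD('n) R \<sigma> 1 * gv + (\<Sum>i\<in>{2..Suc m}. va CARD('n) R \<sigma> i * gg (js i)))"
proof (induction m)
  case 0
  show ?case using R by (simp add: gv va_def field_simps)
next
  case (Suc m)
  show ?case by (simp add: Suc gg algebra_simps)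
qed

lemma phi_val:
  fixes b :: "'n::finite \<Rightarrow> 'x::euclidean_space"
  assumes l: "ell u = ereal l" and R: "R > 0"
  shows "phi b ell R \<sigma> x0 u js ys zs (Suc m) u = ereal (real CARD('n) / 2 * (norm (u - x0))\<^sup>2
     + vA CARD('n) R \<sigma> (Suc m) * l)"
proof (induction m)
  case 0
  show ?case using R by (simp add: l vA_def field_simps)
next
  case (Suc m)
  show ?case by (simp add: Suc l vA_step algebra_simps)
qed

theorem lemma4:
  fixes b :: "'n::finite \<Rightarrow> 'x::euclidean_space"
    and gs :: "'n \<Rightarrow> real \<Rightarrow> ereal"
    and ell :: "'x \<Rightarrow> ereal"
    and R \<sigma> :: real
    and x0 u :: 'x and y0 v :: "real^'n"
    and js :: "nat \<Rightarrow> 'n"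
    and xs :: "nat \<Rightarrow> 'x" and ys :: "nat \<Rightarrow> real^'n" and zs :: "nat \<Rightarrow> 'x"
  assumes n2: "CARD('n) \<ge> 2"
    and R_pos: "R > 0"
    and b_bound: "\<forall>i. norm (b i) \<le> R"
    and g_props: "\<forall>i. proper_fun (gs i) \<and> lsc_fun (gs i) \<and> convex_fun (gs i)"
    and ell_props: "proper_fun ell \<and> lsc_fun ell \<and> strongly_convex_fun \<sigma> ell"
    and sigma_nn: "\<sigma> \<ge> 0"
    and x0_dom: "x0 \<in> edom ell" and y0_dom: "y0 \<in> edom (gstar gs)"
    and u_dom: "u \<in> edom ell" and v_dom: "v \<in> edom (gstar gs)"
    and run: "vrpda2_run b gs ell R \<sigma> x0 y0 u v js xs ys zs"
    and k2: "k \<ge> 2"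
  shows "psi b gs R \<sigma> x0 y0 v js xs k (ys k)
           \<le> (\<Sum>i\<in>{2..k}. ereal (va CARD('n) R \<sigma> i) * gs (js i) (v $ js i))
             + ereal (va CARD('n) R \<sigma> 1) * gstar gs v
             + ereal (real CARD('n) / 2 * (norm (v - y0))\<^sup>2)
             - ereal (real CARD('n) / 2 * (norm (v - ys k))\<^sup>2)
         \<and> phi b ell R \<sigma> x0 u js ys zs k (xs k)
           \<le> ereal (vA CARD('n) R \<sigma> k) * ell u
             + ereal (real CARD('n) / 2 * (norm (u - x0))\<^sup>2)
             - ereal ((real CARD('n) + \<sigma> * vA CARD('n) R \<sigma> k) / 2 * (norm (u - xs k))\<^sup>2)"
proof -
  obtain m where k: "k = Suc m" using k2 by (cases k) auto
  have a: "\<And>j. 0 \<le> va CARD('n) R \<sigma> j" and A: "\<And>j. 0 \<le> vA CARD('n) R \<sigma> j"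
    using va_nonneg[OF n2 R_pos sigma_nn] by auto
  have g: "\<forall>i. convex_fun (gs i) \<and> (\<forall>t. gs i t \<noteq> -\<infinity>)"
    using g_props unfolding proper_fun_def by auto
  have e: "\<forall>t. ell t \<noteq> -\<infinity>" using ell_props unfolding proper_fun_def by auto
  have scsum: "sc 0 (\<lambda>y::real^'n. \<Sum>i\<in>UNIV. gs i (y $ i))"
    by (rule sc_sum) (auto intro!: sc_coord simp: g)
  define S where "S = (\<Sum>i\<in>UNIV. gs i (v $ i))"
  have S1: "S \<noteq> -\<infinity>" using scsum unfolding sc_def S_def by auto
  have vlt: "gstar gs v < \<infinity>" using v_dom unfolding edom_def by auto
  have S2: "S \<noteq> \<infinity>"
  proof
    assume "S = \<infinity>"
    hence "gstar gs v = \<infinity>" unfolding gstar_def S_def[symmetric] by simp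
    thus False using vlt by simp
  qed
  have gfin: "gs i (v $ i) \<noteq> \<infinity>" for i
    using S2 unfolding S_def sum_Pinfty by auto
  define gg where "gg i = real_of_ereal (gs i (v $ i))" for i
  have gg: "\<And>i. gs i (v $ i) = ereal (gg i)"
  proof -
    fix i have "gs i (v $ i) \<noteq> -\<infinity>" using g by auto
    thus "gs i (v $ i) = ereal (gg i)" unfolding gg_def using gfin[of i] by (cases "gs i (v $ i)") auto
  qed
  define gv where "gv = real_of_ereal (gstar gs v)"
  have gvne: "gstar gs v \<noteq> -\<infinity>" using sc_gstar[OF g] unfolding sc_def by auto
  have gv: "gstar gs v = ereal gv" unfolding gv_def using gvne vlt by (cases "gstar gs v") auto
  define l where "l = real_of_ereal (ell u)"
  have l: "ell u = ereal l" using e u_dom unfolding l_def edom_def by (cases "ell u") auto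
  have min1: "\<And>y. psi b gs R \<sigma> x0 y0 v js xs k (ys k) \<le> psi b gs R \<sigma> x0 y0 v js xs k y"
    using run k unfolding vrpda2_run_def by auto
  have min2: "\<And>x. phi b ell R \<sigma> x0 u js ys zs k (xs k) \<le> phi b ell R \<sigma> x0 u js ys zs k x"
    using run k unfolding vrpda2_run_def by auto
  have P1: "psi b gs R \<sigma> x0 y0 v js xs k (ys k) \<le> psi b gs R \<sigma> x0 y0 v js xs k v
      - ereal (real CARD('n) / 2 * (norm (v - ys k))\<^sup>2)"
    unfolding k by (rule sc_min[OF psi_sc[OF R_pos g a]]) (auto simp: min1[unfolded k])
  have P2: "phi b ell R \<sigma> x0 u js ys zs k (xs k) \<le> phi b ell R \<sigma> x0 u js ys zs k u
      - ereal ((real CARD('n) + \<sigma> * vA CARD('n) R \<sigma> k) / 2 * (norm (u - xs k))\<^sup>2)"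
    unfolding k
    by (rule sc_min[OF phi_sc[OF R_pos conjunct2[OF conjunct2[OF ell_props]] e a]])
       (auto simp: min2[unfolded k] sigma_nn A)
  show ?thesis
  proof
    show "psi b gs R \<sigma> x0 y0 v js xs k (ys k)
           \<le> (\<Sum>i\<in>{2..k}. ereal (va CARD('n) R \<sigma> i) * gs (js i) (v $ js i))
             + ereal (va CARD('n) R \<sigma> 1) * gstar gs v
             + ereal (real CARD('n) / 2 * (norm (v - y0))\<^sup>2)
             - ereal (real CARD('n) / 2 * (norm (v - ys k))\<^sup>2)"
    proof -
      have "(\<Sum>i\<in>{2..k}. ereal (va CARD('n) R \<sigma> i) * gs (js i) (v $ js i))
             + ereal (va CARD('n) R \<sigma> 1) * gstar gs v
             + ereal (real CARD('n) / 2 * (norm (v - y0))\<^sup>2)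
          = psi b gs R \<sigma> x0 y0 v js xs k v"
        unfolding k psi_val[OF gg gv R_pos] by (simp add: gg gv)
      thus ?thesis using P1 by simp
    qed
    show "phi b ell R \<sigma> x0 u js ys zs k (xs k)
           \<le> ereal (vA CARD('n) R \<sigma> k) * ell u
             + ereal (real CARD('n) / 2 * (norm (u - x0))\<^sup>2)
             - ereal ((real CARD('n) + \<sigma> * vA CARD('n) R \<sigma> k) / 2 * (norm (u - xs k))\<^sup>2)"
    proof -
      have "ereal (vA CARD('n) R \<sigma> k) * ell u
             + ereal (real CARD('n) / 2 * (norm (u - x0))\<^sup>2)
          = phi b ell R \<sigma> x0 u js ys zs k u"
        unfolding k phi_val[where ell=ell and u=u, OF l R_pos] by (simp add: l)
      thus ?thesis using P2 by simp
    qed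
  qed
qed

end
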